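(* Let $K$ be a field (of arbitrary characteristic), $0\ne q\in K$, $\phi$ the $K$-algebra endomorphism of $K[x]$ with $\phi(x)=qx$, and $\delta=\mathrm{id}-\phi$. Then: 1) if $q=1$, then $\operatorname{Im}\delta=0$; 2) if $q$ is not a root of unity in $K$, then $\operatorname{Im}\delta=xK[x]$; 3) if $q$ is a root of unity in $K$, then $\mathfrak{r}(\operatorname{Im}\delta)=\{0\}$. In all these cases $\operatorname{Im}\delta$ is a Mathieu subspace of $K[x]$.
   Context: $\mathrm{id}$ is the identity map of $K[x]$. For a subset $V$ of $K[x]$, $\mathfrak{r}(V)=\{a\in K[x]\mid a^m\in V\text{ for all } m\gg0\}$. A $K$-subspace $V$ of a commutative $K$-algebra $\mathcal{A}$ is a Mathieu subspace if for all $a,b\in\mathcal{A}$ with $a^m\in V$ for all $m\ge 1$, one has $a^mb\in V$ for all $m\gg 0$. *)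

theory Defs
  imports "HOL-Computational_Algebra.Polynomial"
begin

definition phi_q :: "'a::field \<Rightarrow> 'a poly \<Rightarrow> 'a poly" where
  "phi_q q p = pcompose p [:0, q:]"

definition delta_q :: "'a::field \<Rightarrow> 'a poly \<Rightarrow> 'a poly" where
  "delta_q q p = p - phi_q q p"

definition radical_set :: "'a::field poly set \<Rightarrow> 'a poly set" where
  "radical_set V = {a. \<forall>\<^sub>F m in sequentially. a ^ m \<in> V}"

definition poly_subspace :: "'a::field poly set \<Rightarrow> bool" where
  "poly_subspace V \<longleftrightarrow> 0 \<in> V \<and> (\<forall>u\<in>V. \<forall>v\<in>V. u + v \<in> V) \<and> (\<forall>c. \<forall>u\<in>V. smult c u \<in> V)"

definition mathieu_subspace :: "'a::field poly set \<Rightarrow> bool" where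
  "mathieu_subspace V \<longleftrightarrow> poly_subspace V \<and>
     (\<forall>a b. (\<forall>m\<ge>1. a ^ m \<in> V) \<longrightarrow> (\<forall>\<^sub>F m in sequentially. a ^ m * b \<in> V))"

definition root_of_unity :: "'a::field \<Rightarrow> bool" where
  "root_of_unity q \<longleftrightarrow> (\<exists>n::nat. n \<ge> 1 \<and> q ^ n = 1)"

end

theory Submission
  imports Defs "HOL-Library.More_List"
begin

lemma coeff_delta: "coeff (delta_q q p) i = (1 - q^i) * coeff p i"
  by (simp add: delta_q_def phi_q_def coeff_pcompose_linear algebra_simps)

lemma range_delta:
  fixes q :: "'a::field"
  shows "range (delta_q q) = {f. \<forall>i. q^i = 1 \<longrightarrow> coeff f i = 0}"
proof
  show "range (delta_q q) \<subseteq> {f. \<forall>i. q^i = 1 \<longrightarrow> coeff f i = 0}"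
    by (auto simp: coeff_delta)
next
  show "{f. \<forall>i. q^i = 1 \<longrightarrow> coeff f i = 0} \<subseteq> range (delta_q q)"
  proof
    fix f :: "'a poly" assume f: "f \<in> {f. \<forall>i. q^i = 1 \<longrightarrow> coeff f i = 0}"
    define p where "p = Poly (map (\<lambda>i. coeff f i / (1 - q^i)) [0..<Suc (degree f)])"
    have cp: "coeff p i = (if i \<le> degree f then coeff f i / (1 - q^i) else 0)" for i
      unfolding p_def by (auto simp del: upt_Suc simp: nth_default_def)
    have "delta_q q p = f"
    proof (rule poly_eqI)
      fix i
      show "coeff (delta_q q p) i = coeff f i"
      proof (cases "q^i = 1")
        case True thus ?thesis using f by (simp add: coeff_delta)
      next
        case False
        hence "1 - q^i \<noteq> 0" by simp
        thus ?thesis by (auto simp: coeff_delta cp coeff_eq_0)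
      qed
    qed
    thus "f \<in> range (delta_q q)" by (metis rangeI)
  qed
qed

lemma key:
  fixes q :: "'a::field" and a :: "'a poly"
  assumes "q^n = 1" "a \<noteq> 0"
  shows "\<exists>i. q^i = 1 \<and> coeff (a^(n*k)) i \<noteq> 0"
proof -
  have "q ^ (n*k*degree a) = 1" using assms(1)
    by (metis power_mult power_one)
  moreover have "coeff (a^(n*k)) (n*k*degree a) \<noteq> 0"
    using assms(2) by (metis degree_power_eq lead_coeff_power leading_coeff_0_iff power_eq_0_iff)
  ultimately show ?thesis by blast
qed

theorem lemma3p3:
  fixes q :: "'a::field"
  assumes "q \<noteq> 0"
  shows "(q = 1 \<longrightarrow> range (delta_q q) = {0})
    \<and> (\<not> root_of_unity q \<longrightarrow> range (delta_q q) = {[:0, 1:] * f | f. True})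
    \<and> (root_of_unity q \<longrightarrow> radical_set (range (delta_q q)) = {0})
    \<and> mathieu_subspace (range (delta_q q))"
proof -
  define V where "V = {f::'a poly. \<forall>i. q^i = 1 \<longrightarrow> coeff f i = 0}"
  have R: "range (delta_q q) = V" unfolding V_def by (rule range_delta)
  have P1: "q = 1 \<longrightarrow> V = {0}"
    by (auto simp: V_def poly_eq_iff)
  have P2: "\<not> root_of_unity q \<longrightarrow> V = {[:0, 1:] * f | f. True}"
  proof
    assume nr: "\<not> root_of_unity q"
    have iff: "q^i = 1 \<longleftrightarrow> i = 0" for i
      using nr unfolding root_of_unity_def by (cases i) auto
    have V0: "V = {f. coeff f 0 = 0}" unfolding V_def using iff by auto
    show "V = {[:0, 1:] * f | f. True}"
      unfolding V0
    proof (intro equalityI subsetI)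
      fix f :: "'a poly" assume "f \<in> {f. coeff f 0 = 0}"
      hence "coeff f 0 = 0" by simp
      then obtain g where "f = pCons 0 g" by (cases f) auto
      hence "f = [:0, 1:] * g" by simp
      thus "f \<in> {[:0, 1:] * f | f. True}" by blast
    qed (auto simp add: coeff_mult_0)
  qed
  have K: "a \<in> V \<Longrightarrow> q^n = 1 \<Longrightarrow> a^(n*k) \<in> V \<Longrightarrow> a = 0" for a n k
    using key[of q n a k] unfolding V_def by blast
  have K': "q^n = 1 \<Longrightarrow> a^(n*k) \<in> V \<Longrightarrow> a = 0" for a n k
    using key[of q n a k] unfolding V_def by blast
  have P3: "root_of_unity q \<longrightarrow> radical_set V = {0}"
  proof
    assume "root_of_unity q"
    then obtain n where n: "n \<ge> 1" "q^n = 1" unfolding root_of_unity_def by blast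
    show "radical_set V = {0}"
    proof safe
      fix a assume "a \<in> radical_set V"
      then obtain N where N: "\<And>m. m \<ge> N \<Longrightarrow> a^m \<in> V"
        unfolding radical_set_def eventually_sequentially by blast
      have "n*(N+1) \<ge> N" using mult_le_mono1[OF n(1), of "N+1"] by simp
      hence "a^(n*(N+1)) \<in> V" by (rule N)
      thus "a = 0" using K' n by blast
    next
      show "0 \<in> radical_set V" unfolding radical_set_def V_def eventually_sequentially
        by (auto intro: exI[of _ 1] simp: power_0_left)
    qed
  qed
  have P4: "mathieu_subspace V"
    unfolding mathieu_subspace_def
  proof safe
    show "poly_subspace V" unfolding poly_subspace_def V_def by auto
  next
    fix a b :: "'a poly" assume A: "\<forall>m\<ge>1. a ^ m \<in> V"
    show "\<forall>\<^sub>F m in sequentially. a ^ m * b \<in> V"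
    proof (cases "root_of_unity q")
      case True
      then obtain n where n: "n \<ge> 1" "q^n = 1" unfolding root_of_unity_def by blast
      have "a^(n*1) \<in> V" using A n by simp
      hence "a = 0" using K' n by blast
      thus ?thesis unfolding eventually_sequentially V_def
        by (intro exI[of _ 1]) (auto simp: power_0_left)
    next
      case False
      have iff: "q^i = 1 \<longleftrightarrow> i = 0" for i
        using False unfolding root_of_unity_def by (cases i) auto
      have V0: "V = {f. coeff f 0 = 0}" unfolding V_def using iff by auto
      have "coeff a 0 = 0" using A[rule_format, of 1] V0 by simp
      thus ?thesis unfolding eventually_sequentially V0
        by (intro exI[of _ 1]) (auto simp: coeff_mult_0 coeff_0_power)
    qed
  qed
  show ?thesis unfolding R using P1 P2 P3 P4 by blast
qed

end
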